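(* Let $E=\{a,b,c,d,e\}$ (five distinct events) and let $\delta=(E,\emptyset,\mapsto)$ be the DES with $\mapsto=\{\{x,y\}\mapsto e\mid x,y\in\{a,b,c,d\},\ x\neq y\}$. Then there is no SES $\sigma=(E,\#',\to,\triangleright)$ with the same set of events $E$ such that $\mathrm{Traces}(\delta)=\mathrm{Traces}(\sigma)$. In particular, there exist DESs that cannot be translated into an SES over the same events with the same traces.
   Context: Dual event structure (DES): $\delta=(E,\#,\mapsto)$ with $\#\subseteq E^2$ irreflexive and symmetric, $\mapsto\subseteq 2^E\times E$. For $t=e_1\cdots e_n$, $\overline{t_k}=\{e_1,\ldots,e_k\}$. A DES trace is a finite sequence of pairwise distinct events, pairwise not in conflict, such that for every $i$ and every $X$ with $X\mapsto e_i$ we have $X\cap\overline{t_{i-1}}\neq\emptyset$. SES: $\sigma=(E,\#,\to,\triangleright)$ with $\#\subseteq E^2$ irreflexive and symmetric, $\to\subseteq E^2$ an arbitrary binary relation (initial causality), $\triangleright\subseteq E^3$ with $(c,d,t)\in\triangleright$ implying $c\to t$. $\mathrm{ic}(e)=\{e'\mid e'\to e\}$, $\mathrm{dc}(H,e)=\{e'\mid\exists d\in H.(e',d,e)\in\triangleright\}$. An SES trace is a finite sequence $e_1\cdots e_n$ of pairwise distinct events of $E$, pairwise not in conflict, with $\mathrm{ic}(e_i)\setminus\mathrm{dc}(\overline{t_{i-1}},e_i)\subseteq\overline{t_{i-1}}$ for all $i$. *)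

theory Defs
  imports Main
begin

text \<open>Dual event structures: events E, conflict C, enabling relation En (pairs (X, e) meaning X |-> e).\<close>

definition des :: "'e set \<Rightarrow> ('e \<times> 'e) set \<Rightarrow> ('e set \<times> 'e) set \<Rightarrow> bool" where
  "des E C En \<longleftrightarrow> C \<subseteq> E \<times> E \<and> irrefl C \<and> sym C \<and>
     (\<forall>(X, e) \<in> En. X \<subseteq> E \<and> e \<in> E)"

definition des_trace :: "'e set \<Rightarrow> ('e \<times> 'e) set \<Rightarrow> ('e set \<times> 'e) set \<Rightarrow> 'e list \<Rightarrow> bool" where
  "des_trace E C En t \<longleftrightarrow> distinct t \<and> set t \<subseteq> E \<and>
     (\<forall>i < length t. \<forall>j < length t. (t ! i, t ! j) \<notin> C) \<and>
     (\<forall>i < length t. \<forall>X. (X, t ! i) \<in> En \<longrightarrow> X \<inter> set (take i t) \<noteq> {})"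

definition des_traces :: "'e set \<Rightarrow> ('e \<times> 'e) set \<Rightarrow> ('e set \<times> 'e) set \<Rightarrow> 'e list set" where
  "des_traces E C En = {t. des_trace E C En t}"

text \<open>Shrinking causality event structures: events E, conflict C, initial causality IC,
  shrinking causality SC (triples (c, d, t) meaning c |> [d] t).\<close>

definition ses :: "'e set \<Rightarrow> ('e \<times> 'e) set \<Rightarrow> ('e \<times> 'e) set \<Rightarrow> ('e \<times> 'e \<times> 'e) set \<Rightarrow> bool" where
  "ses E C IC SC \<longleftrightarrow> C \<subseteq> E \<times> E \<and> irrefl C \<and> sym C \<and> IC \<subseteq> E \<times> E \<and>
     SC \<subseteq> E \<times> E \<times> E \<and> (\<forall>(c, d, t) \<in> SC. (c, t) \<in> IC)"

definition ic :: "('e \<times> 'e) set \<Rightarrow> 'e \<Rightarrow> 'e set" where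
  "ic IC e = {e'. (e', e) \<in> IC}"

definition dc :: "('e \<times> 'e \<times> 'e) set \<Rightarrow> 'e set \<Rightarrow> 'e \<Rightarrow> 'e set" where
  "dc SC H e = {e'. \<exists>d \<in> H. (e', d, e) \<in> SC}"

definition ses_trace :: "'e set \<Rightarrow> ('e \<times> 'e) set \<Rightarrow> ('e \<times> 'e) set \<Rightarrow> ('e \<times> 'e \<times> 'e) set \<Rightarrow> 'e list \<Rightarrow> bool" where
  "ses_trace E C IC SC t \<longleftrightarrow> distinct t \<and> set t \<subseteq> E \<and>
     (\<forall>i < length t. \<forall>j < length t. (t ! i, t ! j) \<notin> C) \<and>
     (\<forall>i < length t. ic IC (t ! i) - dc SC (set (take i t)) (t ! i) \<subseteq> set (take i t))"

definition ses_traces :: "'e set \<Rightarrow> ('e \<times> 'e) set \<Rightarrow> ('e \<times> 'e) set \<Rightarrow> ('e \<times> 'e \<times> 'e) set \<Rightarrow> 'e list set" where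
  "ses_traces E C IC SC = {t. ses_trace E C IC SC t}"

end

theory Submission
  imports Defs
begin

lemma conf_set:
  "(\<forall>i<length t. \<forall>j<length t. (t ! i, t ! j) \<notin> C) \<longleftrightarrow> (\<forall>u\<in>set t. \<forall>v\<in>set t. (u, v) \<notin> C)"
proof
  assume "\<forall>i<length t. \<forall>j<length t. (t ! i, t ! j) \<notin> C"
  then show "\<forall>u\<in>set t. \<forall>v\<in>set t. (u, v) \<notin> C" by (auto simp: in_set_conv_nth)
next
  assume "\<forall>u\<in>set t. \<forall>v\<in>set t. (u, v) \<notin> C"
  then show "\<forall>i<length t. \<forall>j<length t. (t ! i, t ! j) \<notin> C" by (meson nth_mem)
qed

definition sQ where "sQ IC SC x H \<longleftrightarrow> ic IC x - dc SC H x \<subseteq> H"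
definition dQ where "dQ En x H \<longleftrightarrow> (\<forall>X. (X, x) \<in> En \<longrightarrow> X \<inter> H \<noteq> {})"

lemma all3:
  "(\<forall>i<length [x,y,z]. Q ([x,y,z]!i) (set (take i [x,y,z]))) \<longleftrightarrow> Q x {} \<and> Q y {x} \<and> Q z {x,y}"
  by (simp add: numeral_eq_Suc All_less_Suc insert_commute; blast)

lemma all2:
  "(\<forall>i<length [x,y]. Q ([x,y]!i) (set (take i [x,y]))) \<longleftrightarrow> Q x {} \<and> Q y {x}"
  by (simp add: numeral_eq_Suc All_less_Suc insert_commute; blast)

lemma all4:
  "(\<forall>i<length [x,y,z,w]. Q ([x,y,z,w]!i) (set (take i [x,y,z,w]))) \<longleftrightarrow> Q x {} \<and> Q y {x} \<and> Q z {x,y} \<and> Q w {x,y,z}"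
  by (simp add: numeral_eq_Suc All_less_Suc insert_commute; blast)

lemma all5:
  "(\<forall>i<length [x,y,z,w,v]. Q ([x,y,z,w,v]!i) (set (take i [x,y,z,w,v]))) \<longleftrightarrow> Q x {} \<and> Q y {x} \<and> Q z {x,y} \<and> Q w {x,y,z} \<and> Q v {x,y,z,w}"
  by (simp add: numeral_eq_Suc All_less_Suc insert_commute; blast)

lemma ses_trace_alt:
  "ses_trace E C IC SC t \<longleftrightarrow> distinct t \<and> set t \<subseteq> E \<and> (\<forall>u\<in>set t. \<forall>v\<in>set t. (u, v) \<notin> C) \<and>
     (\<forall>i < length t. sQ IC SC (t ! i) (set (take i t)))"
  unfolding ses_trace_def conf_set sQ_def by simp

lemma des_trace_alt:
  "des_trace E C En t \<longleftrightarrow> distinct t \<and> set t \<subseteq> E \<and> (\<forall>u\<in>set t. \<forall>v\<in>set t. (u, v) \<notin> C) \<and>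
     (\<forall>i < length t. dQ En (t ! i) (set (take i t)))"
  unfolding des_trace_def conf_set dQ_def by simp

lemma dc_un: "dc SC (A \<union> B) x = dc SC A x \<union> dc SC B x"
  unfolding dc_def by auto

lemma dc_ins: "dc SC (insert y B) x = {z. (z, y, x) \<in> SC} \<union> dc SC B x"
  unfolding dc_def by auto

lemma dc_empty: "dc SC {} x = {}"
  unfolding dc_def by auto

theorem lemma6:
  fixes a b c d e :: 'e
  assumes "distinct [a, b, c, d, e]"
    and "E = {a, b, c, d, e}"
    and "En = {({x, y}, e) | x y. x \<in> {a, b, c, d} \<and> y \<in> {a, b, c, d} \<and> x \<noteq> y}"
  shows "des E {} En \<and>
    \<not> (\<exists>C IC SC. ses E C IC SC \<and> ses_traces E C IC SC = des_traces E {} En)"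
proof
  note dist = assms(1) and Edef = assms(2) and Endef = assms(3)
  show "des E {} En" unfolding des_def Endef Edef by (auto simp: irrefl_def sym_def)
  show "\<not> (\<exists>C IC SC. ses E C IC SC \<and> ses_traces E C IC SC = des_traces E {} En)"
  proof
    assume "\<exists>C IC SC. ses E C IC SC \<and> ses_traces E C IC SC = des_traces E {} En"
    then obtain C IC SC where S: "ses E C IC SC" and T: "ses_traces E C IC SC = des_traces E {} En"
      by blast
    have eq: "ses_trace E C IC SC t \<longleftrightarrow> des_trace E {} En t" for t
      using T unfolding ses_traces_def des_traces_def by blast
    have EnI: "(X, x) \<in> En \<longleftrightarrow> x = e \<and> (\<exists>p q. X = {p, q} \<and> p \<in> {a,b,c,d} \<and> q \<in> {a,b,c,d} \<and> p \<noteq> q)" for X x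
      unfolding Endef by blast
    have d5: "des_trace E {} En [a,b,c,d,e]"
    proof -
      have vac: "(X,z)\<notin>En" if "z \<noteq> e" for X z using that by (simp add: EnI)
      have ee: "\<forall>X. (X,e)\<in>En \<longrightarrow> X \<inter> {a,b,c,d} \<noteq> {}" unfolding EnI by blast
      show ?thesis unfolding des_trace_alt all5 Edef using dist ee by (simp add: dQ_def vac)
    qed
    then have s5: "ses_trace E C IC SC [a,b,c,d,e]" using eq by blast
    then have noC: "\<forall>u\<in>E. \<forall>v\<in>E. (u,v) \<notin> C" unfolding ses_trace_alt Edef by simp
    let ?Q = "\<lambda>H. ic IC e - dc SC H e \<subseteq> H"
    have ok3: "?Q {x,y,w}" if "{x,y,w,v} = {a,b,c,d}" "distinct [x,y,w,v,e]" for x y w v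
    proof -
      have EnI': "(X, z) \<in> En \<longleftrightarrow> z = e \<and> (\<exists>p q. X = {p, q} \<and> p \<in> {x,y,w,v} \<and> q \<in> {x,y,w,v} \<and> p \<noteq> q)" for X z
        unfolding EnI that(1) ..
      have E': "E = {x,y,w,v,e}"
      proof -
        have "E = insert e {a,b,c,d}" unfolding Edef by (simp add: insert_commute)
        also have "\<dots> = insert e {x,y,w,v}" using that(1) by simp
        also have "\<dots> = {x,y,w,v,e}" by (simp add: insert_commute)
        finally show ?thesis .
      qed
      have vac: "(X,z)\<notin>En" if "z \<noteq> e" for X z using that by (simp add: EnI)
      have ee: "\<forall>X. (X,e)\<in>En \<longrightarrow> X \<inter> {x,y,w} \<noteq> {}"
      proof (intro allI impI)
        fix X assume "(X,e)\<in>En"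
        then obtain p q where "X = {p,q}" "p \<in> {x,y,w,v}" "q \<in> {x,y,w,v}" "p \<noteq> q" unfolding EnI' by blast
        then show "X \<inter> {x,y,w} \<noteq> {}" by blast
      qed
      have "des_trace E {} En [x,y,w,e]"
        unfolding des_trace_alt all4 E' using that(2) ee by (simp add: dQ_def vac)
      then have "ses_trace E C IC SC [x,y,w,e]" using eq by blast
      then show ?thesis unfolding ses_trace_alt all4 by (simp add: sQ_def)
    qed
    have nok2: "\<not> ?Q {x,y}" if "{x,y,w,v} = {a,b,c,d}" "distinct [x,y,w,v,e]" for x y w v
    proof
      assume q: "?Q {x,y}"
      have EnI': "(X, z) \<in> En \<longleftrightarrow> z = e \<and> (\<exists>p q. X = {p, q} \<and> p \<in> {x,y,w,v} \<and> q \<in> {x,y,w,v} \<and> p \<noteq> q)" for X z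
        unfolding EnI that(1) ..
      have E': "E = {x,y,w,v,e}"
      proof -
        have "E = insert e {a,b,c,d}" unfolding Edef by (simp add: insert_commute)
        also have "\<dots> = insert e {x,y,w,v}" using that(1) by simp
        also have "\<dots> = {x,y,w,v,e}" by (simp add: insert_commute)
        finally show ?thesis .
      qed
      have vac: "(X,z)\<notin>En" if "z \<noteq> e" for X z using that by (simp add: EnI)
      have "des_trace E {} En [x,y]"
        unfolding des_trace_alt all2 E' using that(2) by (simp add: dQ_def vac)
      then have "ses_trace E C IC SC [x,y]" using eq by blast
      then have "ses_trace E C IC SC [x,y,e]"
        using q noC unfolding ses_trace_alt all2 all3 E' using that(2) by (auto simp: sQ_def)
      then have dt: "des_trace E {} En [x,y,e]" using eq by blast
      have "({w,v}, e) \<in> En" unfolding EnI' using that(2) by force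
      moreover have "{w,v} \<inter> {x,y} = {}" using that(2) by auto
      ultimately show False using dt unfolding des_trace_alt all3 by (auto simp: dQ_def)
    qed
    let ?I = "ic IC e"
    let ?cov = "\<lambda>x z. z = x \<or> (z, x, e) \<in> SC"
    have ok_abc: "?Q {a,b,c}" by (rule ok3[of a b c d]) (use dist in auto)
    have ok_abd: "?Q {a,b,d}" by (rule ok3[of a b d c]) (use dist in auto)
    have ok_acd: "?Q {a,c,d}" by (rule ok3[of a c d b]) (use dist in auto)
    have ok_bcd: "?Q {b,c,d}" by (rule ok3[of b c d a]) (use dist in auto)
    have nok_ab: "\<not> ?Q {a,b}" by (rule nok2[of a b c d]) (use dist in auto)
    then obtain z0 where z0I: "z0 \<in> ?I" and z0n: "\<not> ?cov a z0" "\<not> ?cov b z0"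
      by (auto simp: dc_ins dc_empty)
    have z0cc: "?cov c z0" using ok_abc z0I z0n by (auto simp: dc_ins dc_empty)
    have z0cd: "?cov d z0" using ok_abd z0I z0n by (auto simp: dc_ins dc_empty)
    have nok_ac: "\<not> ?Q {a,c}" by (rule nok2[of a c b d]) (use dist in auto)
    then obtain z1 where z1I: "z1 \<in> ?I" and z1n: "\<not> ?cov a z1" "\<not> ?cov c z1"
      by (auto simp: dc_ins dc_empty)
    have z1cb: "?cov b z1" using ok_abc z1I z1n by (auto simp: dc_ins dc_empty)
    have z1cd: "?cov d z1" using ok_acd z1I z1n by (auto simp: dc_ins dc_empty)
    have nok_ad: "\<not> ?Q {a,d}" by (rule nok2[of a d b c]) (use dist in auto)
    then obtain z2 where z2I: "z2 \<in> ?I" and z2n: "\<not> ?cov a z2" "\<not> ?cov d z2"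
      by (auto simp: dc_ins dc_empty)
    have z2cb: "?cov b z2" using ok_abd z2I z2n by (auto simp: dc_ins dc_empty)
    have z2cc: "?cov c z2" using ok_acd z2I z2n by (auto simp: dc_ins dc_empty)
    have nok_bc: "\<not> ?Q {b,c}" by (rule nok2[of b c a d]) (use dist in auto)
    then obtain z3 where z3I: "z3 \<in> ?I" and z3n: "\<not> ?cov b z3" "\<not> ?cov c z3"
      by (auto simp: dc_ins dc_empty)
    have z3ca: "?cov a z3" using ok_abc z3I z3n by (auto simp: dc_ins dc_empty)
    have z3cd: "?cov d z3" using ok_bcd z3I z3n by (auto simp: dc_ins dc_empty)
    have nok_bd: "\<not> ?Q {b,d}" by (rule nok2[of b d a c]) (use dist in auto)
    then obtain z4 where z4I: "z4 \<in> ?I" and z4n: "\<not> ?cov b z4" "\<not> ?cov d z4"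
      by (auto simp: dc_ins dc_empty)
    have z4ca: "?cov a z4" using ok_abd z4I z4n by (auto simp: dc_ins dc_empty)
    have z4cc: "?cov c z4" using ok_bcd z4I z4n by (auto simp: dc_ins dc_empty)
    have nok_cd: "\<not> ?Q {c,d}" by (rule nok2[of c d a b]) (use dist in auto)
    then obtain z5 where z5I: "z5 \<in> ?I" and z5n: "\<not> ?cov c z5" "\<not> ?cov d z5"
      by (auto simp: dc_ins dc_empty)
    have z5ca: "?cov a z5" using ok_acd z5I z5n by (auto simp: dc_ins dc_empty)
    have z5cb: "?cov b z5" using ok_bcd z5I z5n by (auto simp: dc_ins dc_empty)
    have "z0 \<noteq> z1" using z0cc z1n by auto
    moreover have "z0 \<noteq> z2" using z0cd z2n by auto
    moreover have "z0 \<noteq> z3" using z0cc z3n by auto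
    moreover have "z0 \<noteq> z4" using z0cd z4n by auto
    moreover have "z0 \<noteq> z5" using z0cc z5n by auto
    moreover have "z1 \<noteq> z2" using z1cd z2n by auto
    moreover have "z1 \<noteq> z3" using z1cb z3n by auto
    moreover have "z1 \<noteq> z4" using z1cb z4n by auto
    moreover have "z1 \<noteq> z5" using z1cd z5n by auto
    moreover have "z2 \<noteq> z3" using z2cb z3n by auto
    moreover have "z2 \<noteq> z4" using z2cb z4n by auto
    moreover have "z2 \<noteq> z5" using z2cc z5n by auto
    moreover have "z3 \<noteq> z4" using z3cd z4n by auto
    moreover have "z3 \<noteq> z5" using z3cd z5n by auto
    moreover have "z4 \<noteq> z5" using z4cc z5n by auto
    ultimately have c6: "card {z0,z1,z2,z3,z4,z5} = 6" by simp
    have IE: "?I \<subseteq> E" using S unfolding ses_def ic_def by blast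
    have sub: "{z0,z1,z2,z3,z4,z5} \<subseteq> E" using IE z0I z1I z2I z3I z4I z5I by blast
    have "card E \<le> 5" proof - have "E = set [a,b,c,d,e]" using Edef by simp then show ?thesis using card_length[of "[a,b,c,d,e]"] by simp qed
    moreover have "card {z0,z1,z2,z3,z4,z5} \<le> card E" using sub Edef by (intro card_mono) auto
    ultimately show False using c6 by simp
  qed
qed

end
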